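(* Let $m\in\mathbb{N}$ and let $\{W(t)\}_{t=0}^\infty$ be the standard random walk on the discrete hypercube $\{0,1\}^m$ starting at the origin: $W(0)=0$, and for each $t\in\mathbb{N}$ the vector $W(t)$ is obtained from $W(t-1)$ by choosing an index $i\in\{1,\ldots,m\}$ uniformly at random (independently of the past) and replacing the $i$-th coordinate $W(t-1,i)$ by $1-W(t-1,i)$, leaving the other coordinates unchanged. Then for every $t\in\mathbb{N}$, $$\Pr[W(t)=0]\le 2\left(\frac{t}{m}\right)^{t/2}.$$ *)

theory Defs
  imports "HOL-Probability.Probability"
begin

text \<open>Points of {0,1}^m are represented as
  functions nat \<Rightarrow> nat with values in {0,1} on {1..m} (and 0 elsewhere).\<close>
definition hc_step :: "nat \<Rightarrow> (nat \<Rightarrow> nat) \<Rightarrow> (nat \<Rightarrow> nat) pmf" where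
  "hc_step m w = map_pmf (\<lambda>i. w(i := 1 - w i)) (pmf_of_set {1..m})"

fun hc_walk :: "nat \<Rightarrow> nat \<Rightarrow> (nat \<Rightarrow> nat) pmf" where
  "hc_walk m 0 = return_pmf (\<lambda>_. 0)"
| "hc_walk m (Suc t) = bind_pmf (hc_walk m t) (hc_step m)"

end

theory Submission
  imports Defs
begin

lemma hc_support: "w \<in> set_pmf (hc_walk m t) \<Longrightarrow> w j \<le> 1"
proof (induction t arbitrary: w)
  case 0 then show ?case by simp
next
  case (Suc t)
  then obtain u i where u: "u \<in> set_pmf (hc_walk m t)" and w: "w = u(i := 1 - u i)"
    by (auto simp: hc_step_def)
  then show ?case using Suc.IH[OF u] by auto
qed

lemma hc_rec:
  assumes m: "m \<ge> 1" and v: "\<forall>j. v j \<le> 1"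
  shows "pmf (hc_walk m (Suc t)) v \<le>
           (\<Sum>i\<in>{1..m}. pmf (hc_walk m t) (v(i := 1 - v i))) / real m"
proof -
  let ?p = "hc_walk m t"
  have "hc_walk m (Suc t) = bind_pmf ?p (\<lambda>w. bind_pmf (pmf_of_set {1..m}) (\<lambda>i. return_pmf (w(i := 1 - w i))))"
    by (simp add: hc_step_def[abs_def] map_pmf_def)
  also have "\<dots> = bind_pmf (pmf_of_set {1..m}) (\<lambda>i. map_pmf (\<lambda>w. w(i := 1 - w i)) ?p)"
    by (subst bind_commute_pmf) (simp add: map_pmf_def)
  finally have eq: "pmf (hc_walk m (Suc t)) v = (\<Sum>i\<in>{1..m}. pmf (map_pmf (\<lambda>w. w(i := 1 - w i)) ?p) v) / real m"
    using m by (simp add: pmf_bind_pmf_of_set)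
  have le: "pmf (map_pmf (\<lambda>w. w(i := 1 - w i)) ?p) v \<le> pmf ?p (v(i := 1 - v i))" for i
  proof -
    have "pmf (map_pmf (\<lambda>w. w(i := 1 - w i)) ?p) v = measure ?p ((\<lambda>w. w(i := 1 - w i)) -` {v} \<inter> set_pmf ?p)"
      by (simp add: pmf_map measure_Int_set_pmf)
    also have "\<dots> \<le> measure ?p {v(i := 1 - v i)}"
    proof (rule measure_pmf.finite_measure_mono)
      show "(\<lambda>w. w(i := 1 - w i)) -` {v} \<inter> set_pmf ?p \<subseteq> {v(i := 1 - v i)}"
      proof
        fix w assume "w \<in> (\<lambda>w. w(i := 1 - w i)) -` {v} \<inter> set_pmf ?p"
        then have a: "w(i := 1 - w i) = v" and b: "w i \<le> 1" using hc_support by auto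
        have "w = v(i := 1 - v i)"
        proof
          fix j show "w j = (v(i := 1 - v i)) j"
            using a b fun_cong[OF a, of j] fun_cong[OF a, of i] by (cases "j = i") auto
        qed
        then show "w \<in> {v(i := 1 - v i)}" by simp
      qed
    qed simp
    also have "\<dots> = pmf ?p (v(i := 1 - v i))" by (simp add: measure_pmf_single)
    finally show ?thesis .
  qed
  show ?thesis unfolding eq
    by (intro divide_right_mono sum_mono le) simp
qed


definition hcG :: "nat \<Rightarrow> nat \<Rightarrow> nat \<Rightarrow> real" where
  "hcG m t d = (if d \<le> t \<and> even (t + d) then real t ^ ((t + d) div 2) * real m ^ ((t - d) div 2) else 0)"

lemma hcG_nonneg: "hcG m t d \<ge> 0"
  by (simp add: hcG_def)

lemma bern_aux: fixes x :: real assumes "x \<ge> 0"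
  shows "(x + 1) ^ Suc k \<ge> x ^ Suc k + real (Suc k) * x ^ k"
proof (induction k)
  case 0 then show ?case by simp
next
  case (Suc k)
  have "(x + 1) ^ Suc (Suc k) = (x + 1) ^ Suc k * (x + 1)" by simp
  also have "\<dots> \<ge> (x ^ Suc k + real (Suc k) * x ^ k) * (x + 1)"
    using Suc assms by (intro mult_right_mono) auto
  finally have "(x + 1) ^ Suc (Suc k) \<ge> (x ^ Suc k + real (Suc k) * x ^ k) * (x + 1)" .
  moreover have "(x ^ Suc k + real (Suc k) * x ^ k) * (x + 1)
      = x ^ Suc (Suc k) + real (Suc (Suc k)) * x ^ Suc k + real (Suc k) * x ^ k"
    by (simp add: algebra_simps)
  moreover have "real (Suc k) * x ^ k \<ge> 0" using assms by simp
  ultimately show ?case by linarith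
qed

lemma hcG_step:
  assumes dm: "d \<le> m"
  shows "real d * hcG m t (d - 1) + real (m - d) * hcG m t (d + 1) \<le> hcG m (Suc t) d"
proof (cases "d \<le> Suc t \<and> even (Suc t + d)")
  case False
  have "hcG m t (d + 1) = 0" using False by (auto simp: hcG_def)
  then have z: "real (m - d) * hcG m t (d + 1) = 0" by simp
  have "real d * hcG m t (d - 1) = 0"
  proof (cases "d = 0")
    case False
    then have "\<not> (d - 1 \<le> t \<and> even (t + (d - 1)))" using \<open>\<not> (d \<le> Suc t \<and> even (Suc t + d))\<close>
      by (cases d) auto
    then have "hcG m t (d - 1) = 0" unfolding hcG_def by (rule if_not_P)
    then show ?thesis by simp
  qed simp
  then show ?thesis using z hcG_nonneg[of m "Suc t" d] by linarith
next
  case True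
  have "even (Suc t - d)" using True by (simp add: even_diff_nat)
  then obtain r where "Suc t - d = 2 * r" by (rule evenE) blast
  moreover have "d \<le> Suc t" using True by simp
  ultimately have r: "Suc t = d + 2 * r" by linarith
  define k where "k = d + r"
  have k1: "k \<ge> 1" using r k_def by (cases k) auto
  then obtain k' where k': "k = Suc k'" by (cases k) auto
  have rhs: "hcG m (Suc t) d = real (Suc t) ^ k * real m ^ r"
    unfolding hcG_def k_def using r by simp
  have t1: "real d * hcG m t (d - 1) \<le> real d * real t ^ k' * real m ^ r"
  proof (cases "d = 0")
    case False
    have "hcG m t (d - 1) = real t ^ k' * real m ^ r"
      unfolding hcG_def using r False k' k_def by (cases d) auto
    then show ?thesis by simp
  qed simp
  have t2: "real (m - d) * hcG m t (d + 1) \<le> real t ^ k * real m ^ r"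
  proof (cases "r = 0")
    case True
    then have "hcG m t (d + 1) = 0" unfolding hcG_def using r by auto
    then show ?thesis by simp
  next
    case False
    then obtain r' where r': "r = Suc r'" by (cases r) auto
    have "hcG m t (d + 1) = real t ^ k * real m ^ r'"
      unfolding hcG_def using r r' k_def by auto
    moreover have "real (m - d) * (real t ^ k * real m ^ r') \<le> real m * (real t ^ k * real m ^ r')"
      using dm by (intro mult_right_mono) auto
    ultimately show ?thesis using r' by (simp add: algebra_simps)
  qed
  have "real d \<le> real k" using k_def by simp
  then have "real d * real t ^ k' \<le> real k * real t ^ k'" by (intro mult_right_mono) auto
  then have "real d * real t ^ k' + real t ^ k \<le> real (Suc t) ^ k"
    using bern_aux[of "real t" k'] k' by (simp add: algebra_simps)
  then have "(real d * real t ^ k' + real t ^ k) * real m ^ r \<le> real (Suc t) ^ k * real m ^ r"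
    by (intro mult_right_mono) auto
  then show ?thesis using t1 t2 rhs by (simp add: algebra_simps)
qed

definition hcW :: "nat \<Rightarrow> (nat \<Rightarrow> nat) \<Rightarrow> nat" where
  "hcW m v = card {i \<in> {1..m}. v i = 1}"

lemma hc_main:
  assumes m: "m \<ge> 1"
  shows "\<forall>v. (\<forall>j. v j \<le> 1) \<longrightarrow> pmf (hc_walk m t) v \<le> hcG m t (hcW m v) / real m ^ t"
proof (induction t)
  case 0
  show ?case
  proof (intro allI impI)
    fix v :: "nat \<Rightarrow> nat"
    show "pmf (hc_walk m 0) v \<le> hcG m 0 (hcW m v) / real m ^ 0"
    proof (cases "v = (\<lambda>_. 0)")
      case True
      then have "hcW m v = 0" by (simp add: hcW_def)
      then show ?thesis using True by (simp add: hcG_def)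
    next
      case False
      then show ?thesis using hcG_nonneg[of m 0 "hcW m v"] by auto
    qed
  qed
next
  case (Suc t)
  show ?case
  proof (intro allI impI)
    fix v :: "nat \<Rightarrow> nat"
    assume v: "\<forall>j. v j \<le> 1"
    define D where "D = {i \<in> {1..m}. v i = 1}"
    define d where "d = card D"
    have fD: "finite D" by (simp add: D_def)
    have "D \<subseteq> {1..m}" by (auto simp: D_def)
    then have "d \<le> card {1..m}" unfolding d_def by (intro card_mono) auto
    then have dm: "d \<le> m" by simp
    have hW: "hcW m v = d" by (simp add: hcW_def D_def d_def)
    have w: "hcW m (v(i := 1 - v i)) = (if v i = 1 then d - 1 else d + 1)" if i: "i \<in> {1..m}" for i
    proof (cases "v i = 1")
      case True
      have "{j \<in> {1..m}. (v(i := 1 - v i)) j = 1} = D - {i}" using True by (auto simp: D_def)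
      then show ?thesis using True i fD by (simp add: hcW_def d_def D_def)
    next
      case False
      then have v0: "v i = 0" using v le_SucE by (metis One_nat_def le_zero_eq)
      have "{j \<in> {1..m}. (v(i := 1 - v i)) j = 1} = insert i D" using v0 i by (auto simp: D_def)
      moreover have "i \<notin> D" using v0 by (simp add: D_def)
      ultimately show ?thesis using False fD by (simp add: hcW_def d_def)
    qed
    have v': "\<forall>j. (v(i := 1 - v i)) j \<le> 1" for i using v by auto
    have "pmf (hc_walk m (Suc t)) v \<le> (\<Sum>i\<in>{1..m}. pmf (hc_walk m t) (v(i := 1 - v i))) / real m"
      by (rule hc_rec[OF m v])
    also have "\<dots> \<le> (\<Sum>i\<in>{1..m}. hcG m t (hcW m (v(i := 1 - v i))) / real m ^ t) / real m"
      using Suc v' by (intro divide_right_mono sum_mono) auto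
    also have "(\<Sum>i\<in>{1..m}. hcG m t (hcW m (v(i := 1 - v i))) / real m ^ t)
        = (\<Sum>i\<in>{1..m}. (if v i = 1 then hcG m t (d - 1) else hcG m t (d + 1))) / real m ^ t"
      unfolding sum_divide_distrib by (rule sum.cong[OF refl]) (subst w, auto)
    also have "(\<Sum>i\<in>{1..m}. (if v i = 1 then hcG m t (d - 1) else hcG m t (d + 1)))
        = real d * hcG m t (d - 1) + real (m - d) * hcG m t (d + 1)"
    proof -
      have e1: "{Suc 0..m} \<inter> {x. v x = Suc 0} = D" by (auto simp: D_def)
      have e2: "{Suc 0..m} \<inter> - {x. v x = Suc 0} = {1..m} - D" by (auto simp: D_def)
      have "card ({1..m} - D) = m - d" unfolding d_def
        by (subst card_Diff_subset) (auto simp: D_def)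
      then show ?thesis by (simp add: sum.If_cases e1 e2 d_def)
    qed
    also have "(real d * hcG m t (d - 1) + real (m - d) * hcG m t (d + 1)) / real m ^ t / real m
        \<le> hcG m (Suc t) d / real m ^ t / real m"
      using hcG_step[OF dm] by (intro divide_right_mono) auto
    finally show "pmf (hc_walk m (Suc t)) v \<le> hcG m (Suc t) (hcW m v) / real m ^ Suc t"
      by (simp only: hW divide_divide_eq_left power_Suc2)
  qed
qed

theorem lemma2p10:
  fixes m t :: nat
  assumes "m \<ge> 1" and "t \<ge> 1"
  shows "pmf (hc_walk m t) (\<lambda>_. 0) \<le> 2 * (real t / real m) powr (real t / 2)"
proof -
  have w0: "hcW m (\<lambda>_. 0) = 0" by (simp add: hcW_def)
  have le: "pmf (hc_walk m t) (\<lambda>_. 0) \<le> hcG m t 0 / real m ^ t"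
    using hc_main[OF assms(1), of t] w0 by auto
  have pos: "real t / real m > 0" using assms by simp
  show ?thesis
  proof (cases "even t")
    case False
    then have "hcG m t 0 = 0" by (simp add: hcG_def)
    then show ?thesis using le by simp
  next
    case True
    then obtain k where k: "t = 2 * k" by auto
    have "hcG m t 0 / real m ^ t = real t ^ k * real m ^ k / (real m ^ k * real m ^ k)"
    proof -
      have "real m ^ t = real m ^ k * real m ^ k" unfolding k mult_2 power_add by simp
      moreover have "hcG m t 0 = real t ^ k * real m ^ k" unfolding hcG_def using k by simp
      ultimately show ?thesis by simp
    qed
    also have "\<dots> = (real t / real m) ^ k" using assms by (simp add: power_divide)
    also have "\<dots> = (real t / real m) powr (real t / 2)"
      using pos by (simp add: k powr_realpow)
    finally have "pmf (hc_walk m t) (\<lambda>_. 0) \<le> (real t / real m) powr (real t / 2)" using le by simp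
    moreover have "(real t / real m) powr (real t / 2) \<ge> 0" by simp
    ultimately show ?thesis by linarith
  qed
qed

end
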